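(* Let $c\in Z^{10}$ with $\sum_i c_i=0$, $t\nmid C_i$ for all odd $i$, $t\mid C_3+C_5$, and $t\nmid C_i+C_{i+2}$ for all odd $i\neq 3$ (indices mod $10$). Then there exists $\beta\in\mathbb{C}\setminus\{0,-1,-2\}$ such that $\mathbb{M}(c)\cong\mathbb{M}_\beta$ as $B_{5,10}$-modules.
   Context: Let $Z=\mathbb{C}[[t]]$. Let $\Gamma_{10}$ be the quiver with vertices $0,1,\dots,9$ (indices taken mod $10$) on a cycle and arrows $x_i\colon i-1\to i$, $y_i\colon i\to i-1$ for $i=1,\dots,10$. Let $B_{5,10}$ be the completed path algebra of $\Gamma_{10}$ modulo the closed ideal generated by $xy=yx$ and $x^5=y^5$ at every vertex. For $b=(b_1,\dots,b_{10})\in Z^{10}$ with $\sum_i b_i=0$, the $B_{5,10}$-module $\mathbb{M}(b)$ has $V_i=Z\oplus Z$ at every vertex, and for odd $j$: $x_j=\begin{pmatrix} t& b_j\\ 0&1\end{pmatrix}$, $y_j=\begin{pmatrix} 1&-b_j\\0&t\end{pmatrix}$; for even $j$: $x_j=\begin{pmatrix}1&b_j\\0&t\end{pmatrix}$, $y_j=\begin{pmatrix}t&-b_j\\0&1\end{pmatrix}$. An isomorphism $\mathbb{M}(b)\to\mathbb{M}(c)$ is a family of invertible $Z$-linear maps $\varphi_i\colon Z^2\to Z^2$ commuting with all $x_i$ and $y_i$. For odd $i$ write $B_i=b_i+b_{i+1}$ and $C_i=c_i+c_{i+1}$ (indices mod $10$). For $\beta\in\mathbb{C}\setminus\{0,-1,-2\}$,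 $\mathbb{M}_\beta$ denotes $\mathbb{M}(b)$ for a tuple $b$ with $B_1=\beta$, $B_3=1$, $B_5=-1$, $B_7=-\beta-1$, $B_9=1$ (e.g. $b_i=B_i$ for odd $i$ and $b_i=0$ for even $i$). *)

theory Defs
  imports "HOL-Analysis.Analysis" "HOL-Computational_Algebra.Formal_Power_Series"
begin

(* Z = C[[t]] is  complex fps ; t is fps_X.
   Z-linear maps Z^2 -> Z^2 are 2x2 matrices (complex fps ^2^2) acting on column vectors. *)

definition mat2 :: "'a::zero \<Rightarrow> 'a \<Rightarrow> 'a \<Rightarrow> 'a \<Rightarrow> 'a^2^2" where
  "mat2 a b c d = (\<chi> i j. if i = 1 then (if j = 1 then a else b) else (if j = 1 then c else d))"

(* tuples b = (b_1,...,b_10) are functions nat => complex fps; only indices 1..10 matter *)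

(* matrix of x_j in M(b), x_j : V_{j-1} -> V_j *)
definition Xmat :: "(nat \<Rightarrow> complex fps) \<Rightarrow> nat \<Rightarrow> complex fps^2^2" where
  "Xmat b j = (if odd j then mat2 fps_X (b j) 0 1 else mat2 1 (b j) 0 fps_X)"

(* matrix of y_j in M(b), y_j : V_j -> V_{j-1} *)
definition Ymat :: "(nat \<Rightarrow> complex fps) \<Rightarrow> nat \<Rightarrow> complex fps^2^2" where
  "Ymat b j = (if odd j then mat2 1 (- b j) 0 fps_X else mat2 fps_X (- b j) 0 1)"

definition M_iso :: "(nat \<Rightarrow> complex fps) \<Rightarrow> (nat \<Rightarrow> complex fps) \<Rightarrow> bool" where
  "M_iso b c \<longleftrightarrow> (\<exists>\<phi> :: nat \<Rightarrow> complex fps^2^2.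
      (\<forall>i<10. invertible (\<phi> i)) \<and>
      (\<forall>j\<in>{1..10}. \<phi> (j mod 10) ** Xmat b j = Xmat c j ** \<phi> (j - 1) \<and>
                    \<phi> (j - 1) ** Ymat b j = Ymat c j ** \<phi> (j mod 10)))"

definition beta_tuple :: "complex \<Rightarrow> nat \<Rightarrow> complex fps" where
  "beta_tuple \<beta> i = (if i = 1 then fps_const \<beta> else if i = 3 then 1 else if i = 5 then -1
      else if i = 7 then fps_const (- \<beta> - 1) else if i = 9 then 1 else 0)"

end

theory Submission
  imports Defs
begin

lemma X_dvd_iff: "fps_X dvd (f::complex fps) \<longleftrightarrow> fps_nth f 0 = 0"
proof
  assume "fps_X dvd f" then obtain g where "f = fps_X * g" by (auto simp: dvd_def)
  thus "fps_nth f 0 = 0" by simp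
next
  assume h: "fps_nth f 0 = 0"
  have "f = fps_X * fps_shift 1 f"
    by (rule fps_ext) (simp add: fps_X_mult_nth h)
  thus "fps_X dvd f" by (metis dvd_triv_left)
qed

lemma mat2_mult: "mat2 a b c d ** mat2 a' b' c' d' =
   mat2 (a * a'+b * c') (a * b'+b * d') (c * a'+d * c') (c * b'+d * d')"
  by (simp add: matrix_matrix_mult_def mat2_def vec_eq_iff forall_2 sum_2)

lemma mat2_eq: "mat2 a b c d = mat2 a' b' c' d' \<longleftrightarrow> a=a' \<and> b=b' \<and> c=c' \<and> d=d'"
  by (simp add: mat2_def vec_eq_iff forall_2)

lemma mat2_one: "mat 1 = mat2 1 0 0 1"
  by (simp add: mat_def mat2_def vec_eq_iff forall_2)

lemma mat2_invertible:
  fixes a b c d :: "complex fps"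
  assumes "fps_nth (a * d - b * c) 0 \<noteq> 0"
  shows "invertible (mat2 a b c d)"
proof -
  define i where "i = inverse (a * d - b * c)"
  have h1: "(a * d - b * c) * i = 1" unfolding i_def using assms by (rule inverse_mult_eq_1')
  show ?thesis unfolding invertible_def
    apply (rule exI[of _ "mat2 (d * i) (-b * i) (-c * i) (a * i)"])
    apply (simp add: mat2_mult mat2_one mat2_eq)
    using h1 by (simp add: algebra_simps)
qed

lemma odd_step:
  fixes p q r p0 q0 r0 a e s :: "complex fps"
  assumes "p = p0 + e * s" "r0 = r + a * s" "q = fps_X * q0 + e * r0 - p * a"
  shows "mat2 p q s r ** mat2 fps_X a 0 1 = mat2 fps_X e 0 1 ** mat2 p0 q0 (fps_X * s) r0"
    and "mat2 p0 q0 (fps_X * s) r0 ** mat2 1 (-a) 0 fps_X = mat2 1 (-e) 0 fps_X ** mat2 p q s r"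
  using assms by (simp_all add: mat2_mult mat2_eq algebra_simps)

lemma even_step:
  fixes p q r p0 q0 r0 a e s :: "complex fps"
  assumes "p = p0 + e * s" "r0 = r + a * s" "fps_X * q = q0 + e * r0 - p * a"
  shows "mat2 p q (fps_X * s) r ** mat2 1 a 0 fps_X = mat2 1 e 0 fps_X ** mat2 p0 q0 s r0"
    and "mat2 p0 q0 s r0 ** mat2 fps_X (-a) 0 1 = mat2 fps_X (-e) 0 1 ** mat2 p q (fps_X * s) r"
  using assms by (simp_all add: mat2_mult mat2_eq algebra_simps)


theorem proposition2p9:
  fixes c :: "nat \<Rightarrow> complex fps"
  assumes "(\<Sum>i=1..10. c i) = 0"
    and "\<forall>i\<in>{1,3,5,7,9}. \<not> fps_X dvd (c i + c (i+1))"
    and "fps_X dvd ((c 3 + c 4) + (c 5 + c 6))"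
    and "\<not> fps_X dvd ((c 1 + c 2) + (c 3 + c 4))"
    and "\<not> fps_X dvd ((c 5 + c 6) + (c 7 + c 8))"
    and "\<not> fps_X dvd ((c 7 + c 8) + (c 9 + c 10))"
    and "\<not> fps_X dvd ((c 9 + c 10) + (c 1 + c 2))"
  shows "\<exists>\<beta>::complex. \<beta> \<notin> {0, -1, -2} \<and> M_iso c (beta_tuple \<beta>)"
proof -
  define a where "a = (\<lambda>i. fps_nth (c i) 0)"
  have a_simp: "fps_nth (c i) 0 = a i" for i by (simp add: a_def)
  have hsum: "c 1 + c 2 + c 3 + c 4 + c 5 + c 6 + c 7 + c 8 + c 9 + c 10 = 0"
    using assms(1) by (simp add: eval_nat_numeral add.assoc)
  have asum: "a 1 + a 2 + a 3 + a 4 + a 5 + a 6 + a 7 + a 8 + a 9 + a 10 = 0"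
    using arg_cong[OF hsum, of "\<lambda>f. fps_nth f 0"] by (simp add: a_simp)
  have "\<not> fps_X dvd (c 1 + c (1+1))" "\<not> fps_X dvd (c 3 + c (3+1))" "\<not> fps_X dvd (c 7 + c (7+1))" "\<not> fps_X dvd (c 9 + c (9+1))"
    using assms(2) by blast+
  hence n1: "a 1 + a 2 \<noteq> 0" "a 3 + a 4 \<noteq> 0" "a 7 + a 8 \<noteq> 0" "a 9 + a 10 \<noteq> 0"
    by (simp_all add: X_dvd_iff a_simp del: One_nat_def)
  have h56: "a 5 + a 6 = -(a 3 + a 4)"
    using assms(3) by (simp add: X_dvd_iff a_simp algebra_simps add_eq_0_iff)
  have n13: "a 1 + a 2 + (a 3 + a 4) \<noteq> 0" using assms(4) by (simp add: X_dvd_iff a_simp)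
  have n57: "a 5 + a 6 + (a 7 + a 8) \<noteq> 0" using assms(5) by (simp add: X_dvd_iff a_simp)
  define x where "x = a 1 + a 2"
  define y where "y = a 3 + a 4"
  define z where "z = a 7 + a 8"
  define w where "w = a 9 + a 10"
  have xn: "x \<noteq> 0" "y \<noteq> 0" "z \<noteq> 0" "w \<noteq> 0" using n1 by (auto simp: x_def y_def z_def w_def)
  have xyn: "x + y \<noteq> 0" using n13 by (simp add: x_def y_def)
  have zy: "z \<noteq> y" using n57 h56 by (auto simp: z_def y_def algebra_simps)
  have xzw: "x + z = - w" using asum h56 unfolding x_def z_def w_def by algebra
  have xzn: "x + z \<noteq> 0" using xzw xn by simp
  define gm where "gm = csqrt (z * (x + y) / (y * (x + z)))"
  have hg: "gm^2 * (y * (x + z)) = z * (x + y)"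
    using xn xzn by (simp add: gm_def)
  have gm0: "gm \<noteq> 0" using hg xn xyn by auto
  have gm1: "gm^2 \<noteq> 1"
  proof
    assume "gm^2 = 1"
    with hg have "y * (x + z) = z * (x + y)" by simp
    hence "x * (y - z) = 0" by (simp add: algebra_simps)
    with xn zy show False by simp
  qed
  have gm1': "gm \<noteq> 1" "gm \<noteq> -1" using gm1 by auto
  define bt where "bt = gm - 1"
  define v where "v = bt * y * gm"
  define sg where "sg = x - bt * y"
  define u where "u = x * (x + y)"
  have btn: "bt \<noteq> 0" using gm1' by (simp add: bt_def)
  have cp0: "v \<noteq> 0" using btn xn gm0 by (simp add: v_def)
  have "v + sg * bt = bt * (x + y)" by (simp add: v_def sg_def bt_def algebra_simps)
  hence cp2: "v + sg * bt \<noteq> 0" using btn xyn by simp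
  have "v + sg * (bt + 1) = gm * x" by (simp add: v_def sg_def bt_def algebra_simps)
  hence cp4: "v + sg * (bt + 1) \<noteq> 0" using gm0 xn by simp
  have "(v - sg) * (x + z) = gm^2 * (y * (x + z)) - (x + y) * (x + z)"
    by (simp add: v_def sg_def bt_def power2_eq_square algebra_simps)
  also have "\<dots> = - x * (x + y)" using hg by (simp add: algebra_simps)
  finally have "(v - sg) * (x + z) = - x * (x + y)" .
  hence cp8: "v - sg \<noteq> 0" using xn xyn by auto
  have cr0: "u \<noteq> 0" using xn xyn by (simp add: u_def)
  have "u - sg * x = x * y * gm" by (simp add: u_def sg_def bt_def algebra_simps)
  hence cr2: "u - sg * x \<noteq> 0" using xn gm0 by simp
  have "u - sg * (x + y) = bt * y * (x + y)" by (simp add: u_def sg_def algebra_simps)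
  hence cr4: "u - sg * (x + y) \<noteq> 0" using xn xyn btn by simp
  have "u - sg * (x + z) + bt * gm * y * (x + z) = gm^2 * (y * (x + z)) - z * (x + y)"
    by (simp add: u_def sg_def bt_def power2_eq_square algebra_simps)
  hence "u - sg * (x + z) = - bt * gm * y * (x + z)" using hg by (simp add: algebra_simps)
  hence cr8: "u - sg * (x + z) \<noteq> 0" using xn xzn btn gm0 by simp
  have "1 + gm \<noteq> 0" using gm1'(2) by (metis add_eq_0_iff)
  hence btnot: "bt \<notin> {0, -1, -2}" using gm1' gm0 by (auto simp: bt_def)
  define S where "S = fps_const sg"
  define e where "e = beta_tuple bt"
  have e_simps: "e 1 = fps_const bt" "e (Suc 0) = fps_const bt" "e 2 = 0" "e 3 = 1" "e 4 = 0" "e 5 = -1" "e 6 = 0"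
     "e 7 = fps_const (- bt - 1)" "e 8 = 0" "e 9 = 1" "e 10 = 0"
    by (simp_all add: e_def beta_tuple_def)
  define p0 where "p0 = fps_const v"
  define p1 where "p1 = fps_const (v + sg * bt)"
  define p2 where "p2 = p1"
  define p3 where "p3 = fps_const (v + sg * (bt + 1))"
  define p4 where "p4 = p3"
  define p5 where "p5 = fps_const (v + sg * bt)"
  define p6 where "p6 = p5"
  define p7 where "p7 = fps_const (v - sg)"
  define p8 where "p8 = p7"
  define p9 where "p9 = fps_const v"
  define r0 where "r0 = fps_const u"
  define r1 where "r1 = r0 - c 1 * S"
  define r2 where "r2 = r1 - c 2 * S"
  define r3 where "r3 = r2 - c 3 * S"
  define r4 where "r4 = r3 - c 4 * S"
  define r5 where "r5 = r4 - c 5 * S"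
  define r6 where "r6 = r5 - c 6 * S"
  define r7 where "r7 = r6 - c 7 * S"
  define r8 where "r8 = r7 - c 8 * S"
  define r9 where "r9 = r8 - c 9 * S"
  define D1 where "D1 = e 1 * r0 - p1 * c 1"
  define D2 where "D2 = e 2 * r1 - p2 * c 2"
  define D3 where "D3 = e 3 * r2 - p3 * c 3"
  define D4 where "D4 = e 4 * r3 - p4 * c 4"
  define D5 where "D5 = e 5 * r4 - p5 * c 5"
  define D6 where "D6 = e 6 * r5 - p6 * c 6"
  define D7 where "D7 = e 7 * r6 - p7 * c 7"
  define D8 where "D8 = e 8 * r7 - p8 * c 8"
  define D9 where "D9 = e 9 * r8 - p9 * c 9"
  define D10 where "D10 = e 10 * r9 - p0 * c 10"
  note rdefs = r0_def r1_def r2_def r3_def r4_def r5_def r6_def r7_def r8_def r9_def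
  note pdefs = p0_def p1_def p2_def p3_def p4_def p5_def p6_def p7_def p8_def p9_def
  have "fps_nth (D1 + D2) 0 = bt * u - (v + sg * bt) * x"
    by (simp add: D1_def D2_def e_simps rdefs pdefs a_simp S_def x_def algebra_simps)
  also have "\<dots> = 0" by (simp add: u_def v_def sg_def bt_def algebra_simps)
  finally have X1: "fps_nth (D1 + D2) 0 = 0" .
  have "fps_nth (D3 + D4) 0 = u - sg * x - (v + sg * (bt + 1)) * y"
    by (simp add: D3_def D4_def e_simps rdefs pdefs a_simp S_def x_def y_def algebra_simps)
  also have "\<dots> = 0" by (simp add: u_def v_def sg_def bt_def algebra_simps)
  finally have X3: "fps_nth (D3 + D4) 0 = 0" .
  have "fps_nth (D5 + D6) 0 = - (u - sg * (x + y)) - (v + sg * bt) * (a 5 + a 6)"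
    by (simp add: D5_def D6_def e_simps rdefs pdefs a_simp S_def x_def y_def algebra_simps)
  also have "\<dots> = 0" unfolding h56 by (simp add: u_def v_def sg_def bt_def y_def[symmetric] algebra_simps)
  finally have X5: "fps_nth (D5 + D6) 0 = 0" .
  have "fps_nth (D7 + D8) 0 = (- bt - 1) * (u - sg * (x + y + (a 5 + a 6))) - (v - sg) * z"
    by (simp add: D7_def D8_def e_simps rdefs pdefs a_simp S_def x_def y_def z_def algebra_simps)
  also have "\<dots> = z * (x + y) - gm^2 * (y * (x + z))" unfolding h56
    by (simp add: u_def v_def sg_def bt_def y_def[symmetric] power2_eq_square algebra_simps)
  also have "\<dots> = 0" using hg by simp
  finally have X7: "fps_nth (D7 + D8) 0 = 0" .
  obtain S1 where hS1: "D1 + D2 = fps_X * S1" using X1 X_dvd_iff by (metis dvdE)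
  obtain S3 where hS3: "D3 + D4 = fps_X * S3" using X3 X_dvd_iff by (metis dvdE)
  obtain S5 where hS5: "D5 + D6 = fps_X * S5" using X5 X_dvd_iff by (metis dvdE)
  obtain S7 where hS7: "D7 + D8 = fps_X * S7" using X7 X_dvd_iff by (metis dvdE)
  define q0 where "q0 = (0::complex fps)"
  define q1 where "q1 = fps_X * q0 + D1"
  define q2 where "q2 = q0 + S1"
  define q3 where "q3 = fps_X * q2 + D3"
  define q4 where "q4 = q2 + S3"
  define q5 where "q5 = fps_X * q4 + D5"
  define q6 where "q6 = q4 + S5"
  define q7 where "q7 = fps_X * q6 + D7"
  define q8 where "q8 = q6 + S7"
  define q9 where "q9 = fps_X * q8 + D9"
  have c10: "c 10 = - (c 1 + c 2 + c 3 + c 4 + c 5 + c 6 + c 7 + c 8 + c 9)"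
    using hsum by (metis add_eq_0_iff)
  have sumD: "D1 + D2 + D3 + D4 + D5 + D6 + D7 + D8 + D9 + D10 = 0"
    unfolding D1_def D2_def D3_def D4_def D5_def D6_def D7_def D8_def D9_def D10_def e_simps rdefs pdefs c10
    by (simp add: S_def algebra_simps del: fps_const_add fps_const_mult fps_const_neg fps_const_sub
          add: fps_const_add[symmetric] fps_const_mult[symmetric] fps_const_neg[symmetric] fps_const_sub[symmetric])
  have hclose: "q9 + D10 = 0"
  proof -
    have "q9 + D10 = D1 + D2 + D3 + D4 + D5 + D6 + D7 + D8 + D9 + D10"
      unfolding q9_def q8_def q6_def q4_def q2_def q0_def
      by (simp add: distrib_left hS1[symmetric] hS3[symmetric] hS5[symmetric] hS7[symmetric] algebra_simps)
    thus ?thesis using sumD by simp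
  qed
  have R2: "fps_nth r2 0 = u - sg * x" by (simp add: rdefs a_simp S_def x_def algebra_simps)
  have R4: "fps_nth r4 0 = u - sg * (x + y)" by (simp add: rdefs a_simp S_def x_def y_def algebra_simps)
  have "fps_nth r6 0 = u - sg * (x + y + (a 5 + a 6))" by (simp add: rdefs a_simp S_def x_def y_def algebra_simps)
  hence R6: "fps_nth r6 0 = u - sg * x" unfolding h56 by (simp add: y_def)
  have "fps_nth r8 0 = u - sg * (x + y + (a 5 + a 6) + z)" by (simp add: rdefs a_simp S_def x_def y_def z_def algebra_simps)
  hence R8: "fps_nth r8 0 = u - sg * (x + z)" unfolding h56 by (simp add: y_def algebra_simps)
  have inv0: "invertible (mat2 p0 q0 (fps_X * S) r0)"
    by (rule mat2_invertible, insert cp0 cp2 cp4 cp8 cr0 cr2 cr4 cr8, simp add: pdefs R2 R4 R6 R8 r0_def)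
  have inv2: "invertible (mat2 p2 q2 (fps_X * S) r2)"
    by (rule mat2_invertible, insert cp0 cp2 cp4 cp8 cr0 cr2 cr4 cr8, simp add: pdefs R2 R4 R6 R8 r0_def)
  have inv4: "invertible (mat2 p4 q4 (fps_X * S) r4)"
    by (rule mat2_invertible, insert cp0 cp2 cp4 cp8 cr0 cr2 cr4 cr8, simp add: pdefs R2 R4 R6 R8 r0_def)
  have inv6: "invertible (mat2 p6 q6 (fps_X * S) r6)"
    by (rule mat2_invertible, insert cp0 cp2 cp4 cp8 cr0 cr2 cr4 cr8, simp add: pdefs R2 R4 R6 R8 r0_def)
  have inv8: "invertible (mat2 p8 q8 (fps_X * S) r8)"
    by (rule mat2_invertible, insert cp0 cp2 cp4 cp8 cr0 cr2 cr4 cr8, simp add: pdefs R2 R4 R6 R8 r0_def)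
  have "fps_nth (p1 * r1 - q1 * S) 0 = fps_nth (p0 * r0) 0"
    by (simp add: q1_def D1_def r1_def pdefs e_simps S_def a_simp algebra_simps)
  hence inv1: "invertible (mat2 p1 q1 S r1)"
    by (intro mat2_invertible, insert cp0 cp2 cp4 cp8 cr0 cr2 cr4 cr8, simp add: pdefs R2 R4 R6 R8 r0_def)
  have "fps_nth (p3 * r3 - q3 * S) 0 = fps_nth (p2 * r2) 0"
    by (simp add: q3_def D3_def r3_def pdefs e_simps S_def a_simp algebra_simps)
  hence inv3: "invertible (mat2 p3 q3 S r3)"
    by (intro mat2_invertible, insert cp0 cp2 cp4 cp8 cr0 cr2 cr4 cr8, simp add: pdefs R2 R4 R6 R8 r0_def)
  have "fps_nth (p5 * r5 - q5 * S) 0 = fps_nth (p4 * r4) 0"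
    by (simp add: q5_def D5_def r5_def pdefs e_simps S_def a_simp algebra_simps)
  hence inv5: "invertible (mat2 p5 q5 S r5)"
    by (intro mat2_invertible, insert cp0 cp2 cp4 cp8 cr0 cr2 cr4 cr8, simp add: pdefs R2 R4 R6 R8 r0_def)
  have "fps_nth (p7 * r7 - q7 * S) 0 = fps_nth (p6 * r6) 0"
    by (simp add: q7_def D7_def r7_def pdefs e_simps S_def a_simp algebra_simps)
  hence inv7: "invertible (mat2 p7 q7 S r7)"
    by (intro mat2_invertible, insert cp0 cp2 cp4 cp8 cr0 cr2 cr4 cr8, simp add: pdefs R2 R4 R6 R8 r0_def)
  have "fps_nth (p9 * r9 - q9 * S) 0 = fps_nth (p8 * r8) 0"
    by (simp add: q9_def D9_def r9_def pdefs e_simps S_def a_simp algebra_simps)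
  hence inv9: "invertible (mat2 p9 q9 S r9)"
    by (intro mat2_invertible, insert cp0 cp2 cp4 cp8 cr0 cr2 cr4 cr8, simp add: pdefs R2 R4 R6 R8 r0_def)
  have hp1: "p1 = p0 + e 1 * S" by (simp add: pdefs e_simps S_def algebra_simps)
  have hr1: "r0 = r1 + c 1 * S" by (simp add: r1_def)
  have hq1: "q1 = fps_X * q0 + e 1 * r0 - p1 * c 1" by (simp add: q1_def D1_def add_diff_eq)
  note st1 = odd_step[where p=p1 and q=q1 and r=r1 and p0=p0 and q0=q0 and r0=r0 and a="c 1" and e="e 1" and s=S, OF hp1 hr1 hq1]
  have hp2: "p2 = p1 + e 2 * S" by (simp add: pdefs e_simps S_def algebra_simps)
  have hr2: "r1 = r2 + c 2 * S" by (simp add: r2_def)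
  have "fps_X * q2 = q1 + D2" unfolding q2_def q1_def by (simp add: distrib_left hS1[symmetric] algebra_simps)
  hence hq2: "fps_X * q2 = q1 + e 2 * r1 - p2 * c 2" by (simp add: D2_def add_diff_eq)
  note st2 = even_step[where p=p2 and q=q2 and r=r2 and p0=p1 and q0=q1 and r0=r1 and a="c 2" and e="e 2" and s=S, OF hp2 hr2 hq2]
  have hp3: "p3 = p2 + e 3 * S" by (simp add: pdefs e_simps S_def algebra_simps)
  have hr3: "r2 = r3 + c 3 * S" by (simp add: r3_def)
  have hq3: "q3 = fps_X * q2 + e 3 * r2 - p3 * c 3" by (simp add: q3_def D3_def add_diff_eq)
  note st3 = odd_step[where p=p3 and q=q3 and r=r3 and p0=p2 and q0=q2 and r0=r2 and a="c 3" and e="e 3" and s=S, OF hp3 hr3 hq3]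
  have hp4: "p4 = p3 + e 4 * S" by (simp add: pdefs e_simps S_def algebra_simps)
  have hr4: "r3 = r4 + c 4 * S" by (simp add: r4_def)
  have "fps_X * q4 = q3 + D4" unfolding q4_def q3_def by (simp add: distrib_left hS3[symmetric] algebra_simps)
  hence hq4: "fps_X * q4 = q3 + e 4 * r3 - p4 * c 4" by (simp add: D4_def add_diff_eq)
  note st4 = even_step[where p=p4 and q=q4 and r=r4 and p0=p3 and q0=q3 and r0=r3 and a="c 4" and e="e 4" and s=S, OF hp4 hr4 hq4]
  have hp5: "p5 = p4 + e 5 * S" by (simp add: pdefs e_simps S_def algebra_simps)
  have hr5: "r4 = r5 + c 5 * S" by (simp add: r5_def)
  have hq5: "q5 = fps_X * q4 + e 5 * r4 - p5 * c 5" by (simp add: q5_def D5_def add_diff_eq)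
  note st5 = odd_step[where p=p5 and q=q5 and r=r5 and p0=p4 and q0=q4 and r0=r4 and a="c 5" and e="e 5" and s=S, OF hp5 hr5 hq5]
  have hp6: "p6 = p5 + e 6 * S" by (simp add: pdefs e_simps S_def algebra_simps)
  have hr6: "r5 = r6 + c 6 * S" by (simp add: r6_def)
  have "fps_X * q6 = q5 + D6" unfolding q6_def q5_def by (simp add: distrib_left hS5[symmetric] algebra_simps)
  hence hq6: "fps_X * q6 = q5 + e 6 * r5 - p6 * c 6" by (simp add: D6_def add_diff_eq)
  note st6 = even_step[where p=p6 and q=q6 and r=r6 and p0=p5 and q0=q5 and r0=r5 and a="c 6" and e="e 6" and s=S, OF hp6 hr6 hq6]
  have hp7: "p7 = p6 + e 7 * S" by (simp add: pdefs e_simps S_def algebra_simps)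
  have hr7: "r6 = r7 + c 7 * S" by (simp add: r7_def)
  have hq7: "q7 = fps_X * q6 + e 7 * r6 - p7 * c 7" by (simp add: q7_def D7_def add_diff_eq)
  note st7 = odd_step[where p=p7 and q=q7 and r=r7 and p0=p6 and q0=q6 and r0=r6 and a="c 7" and e="e 7" and s=S, OF hp7 hr7 hq7]
  have hp8: "p8 = p7 + e 8 * S" by (simp add: pdefs e_simps S_def algebra_simps)
  have hr8: "r7 = r8 + c 8 * S" by (simp add: r8_def)
  have "fps_X * q8 = q7 + D8" unfolding q8_def q7_def by (simp add: distrib_left hS7[symmetric] algebra_simps)
  hence hq8: "fps_X * q8 = q7 + e 8 * r7 - p8 * c 8" by (simp add: D8_def add_diff_eq)
  note st8 = even_step[where p=p8 and q=q8 and r=r8 and p0=p7 and q0=q7 and r0=r7 and a="c 8" and e="e 8" and s=S, OF hp8 hr8 hq8]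
  have hp9: "p9 = p8 + e 9 * S" by (simp add: pdefs e_simps S_def algebra_simps)
  have hr9: "r8 = r9 + c 9 * S" by (simp add: r9_def)
  have hq9: "q9 = fps_X * q8 + e 9 * r8 - p9 * c 9" by (simp add: q9_def D9_def add_diff_eq)
  note st9 = odd_step[where p=p9 and q=q9 and r=r9 and p0=p8 and q0=q8 and r0=r8 and a="c 9" and e="e 9" and s=S, OF hp9 hr9 hq9]
  have hp10: "p0 = p9 + e 10 * S" by (simp add: pdefs e_simps S_def algebra_simps)
  have hr10: "r9 = r0 + c 10 * S" unfolding rdefs c10 by (simp add: algebra_simps)
  have "fps_X * q0 = q9 + D10" using hclose by (simp add: q0_def)
  hence hq10: "fps_X * q0 = q9 + e 10 * r9 - p0 * c 10" by (simp add: D10_def add_diff_eq)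
  note st10 = even_step[where p=p0 and q=q0 and r=r0 and p0=p9 and q0=q9 and r0=r9 and a="c 10" and e="e 10" and s=S, OF hp10 hr10 hq10]
  define \<Phi> where "\<Phi> = (\<lambda>i::nat. if i = 0 then mat2 p0 q0 (fps_X * S) r0 else if i = 1 then mat2 p1 q1 S r1 else if i = 2 then mat2 p2 q2 (fps_X * S) r2 else if i = 3 then mat2 p3 q3 S r3 else if i = 4 then mat2 p4 q4 (fps_X * S) r4 else if i = 5 then mat2 p5 q5 S r5 else if i = 6 then mat2 p6 q6 (fps_X * S) r6 else if i = 7 then mat2 p7 q7 S r7 else if i = 8 then mat2 p8 q8 (fps_X * S) r8 else mat2 p9 q9 S r9)"
  have inv: "\<forall>i<10. invertible (\<Phi> i)"
  proof (intro allI impI)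
    fix i :: nat assume "i < 10"
    hence "i = 0 \<or> i = 1 \<or> i = 2 \<or> i = 3 \<or> i = 4 \<or> i = 5 \<or> i = 6 \<or> i = 7 \<or> i = 8 \<or> i = 9" by arith
    thus "invertible (\<Phi> i)" unfolding \<Phi>_def
      using inv0 inv1 inv2 inv3 inv4 inv5 inv6 inv7 inv8 inv9 by auto
  qed
  have comm: "\<forall>j\<in>{1..10}. \<Phi> (j mod 10) ** Xmat c j = Xmat e j ** \<Phi> (j - 1) \<and>
                    \<Phi> (j - 1) ** Ymat c j = Ymat e j ** \<Phi> (j mod 10)"
  proof
    fix j :: nat assume "j \<in> {1..10}"
    hence "j = 1 \<or> j = 2 \<or> j = 3 \<or> j = 4 \<or> j = 5 \<or> j = 6 \<or> j = 7 \<or> j = 8 \<or> j = 9 \<or> j = 10" by (simp, arith)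
    thus "\<Phi> (j mod 10) ** Xmat c j = Xmat e j ** \<Phi> (j - 1) \<and>
                    \<Phi> (j - 1) ** Ymat c j = Ymat e j ** \<Phi> (j mod 10)"
    proof (elim disjE)
      assume "j = 1" thus ?thesis using st1 by (simp add: \<Phi>_def Xmat_def Ymat_def)
    next
      assume "j = 2" thus ?thesis using st2 by (simp add: \<Phi>_def Xmat_def Ymat_def)
    next
      assume "j = 3" thus ?thesis using st3 by (simp add: \<Phi>_def Xmat_def Ymat_def)
    next
      assume "j = 4" thus ?thesis using st4 by (simp add: \<Phi>_def Xmat_def Ymat_def)
    next
      assume "j = 5" thus ?thesis using st5 by (simp add: \<Phi>_def Xmat_def Ymat_def)
    next
      assume "j = 6" thus ?thesis using st6 by (simp add: \<Phi>_def Xmat_def Ymat_def)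
    next
      assume "j = 7" thus ?thesis using st7 by (simp add: \<Phi>_def Xmat_def Ymat_def)
    next
      assume "j = 8" thus ?thesis using st8 by (simp add: \<Phi>_def Xmat_def Ymat_def)
    next
      assume "j = 9" thus ?thesis using st9 by (simp add: \<Phi>_def Xmat_def Ymat_def)
    next
      assume "j = 10" thus ?thesis using st10 by (simp add: \<Phi>_def Xmat_def Ymat_def)
    qed
  qed
  have "M_iso c e" unfolding M_iso_def using inv comm by blast
  thus ?thesis using btnot unfolding e_def by blast
qed

end
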